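(* Let $\mathbb{K}$ be an algebraically closed field and let $(\Lambda_1,\Lambda_2,\Lambda_3)$ be a triangular dual $3$-net in $PG(2,\mathbb{K})$. Then every point of $\Lambda_1\cup\Lambda_2\cup\Lambda_3$ is the center of a unique involutory homology which preserves $(\Lambda_1,\Lambda_2,\Lambda_3)$.
   Context: A dual $3$-net of order $n$ in $PG(2,\mathbb{K})$ is a triple $(\Lambda_1,\Lambda_2,\Lambda_3)$ of pairwise disjoint point sets, each of size $n$, such that every line meeting two distinct components meets each component in exactly one point. A dual $3$-net of order $n\ge4$ is triangular if its three components lie respectively on the three sides of a triangle. An involutory homology is a projectivity of order $2$ of $PG(2,\mathbb{K})$ fixing pointwise a line (axis) and fixing a point (center) not on the axis. A projectivity preserves the dual $3$-net if it maps $\Lambda_1\cup\Lambda_2\cup\Lambda_3$ onto itself (permuting the components).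
   Formalization: The algebraically closed field $\mathbb{K}$ is further assumed to have characteristic different from 2. The paper assumes this as well. *)

theory Defs
  imports "HOL-Analysis.Analysis" "HOL-Computational_Algebra.Polynomial"
begin

definition alg_closed :: "'a::field itself \<Rightarrow> bool" where
  "alg_closed _ \<longleftrightarrow> (\<forall>p :: 'a poly. degree p > 0 \<longrightarrow> (\<exists>x. poly p x = 0))"

text \<open>The projective plane PG(2,K): a point is the set of nonzero scalar
  multiples of a nonzero vector of K^3.\<close>
type_synonym 'a pgpoint = "('a ^ 3) set"

definition pt :: "'a::field ^ 3 \<Rightarrow> 'a pgpoint" where
  "pt v = {c *s v | c. c \<noteq> 0}"

definition pg_points :: "'a::field pgpoint set" where
  "pg_points = {pt v | v. v \<noteq> 0}"

definition dot3 :: "'a::field ^ 3 \<Rightarrow> 'a ^ 3 \<Rightarrow> 'a" where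
  "dot3 u v = (\<Sum>i\<in>UNIV. u $ i * v $ i)"

definition line_of :: "'a::field ^ 3 \<Rightarrow> 'a pgpoint set" where
  "line_of u = {pt v | v. v \<noteq> 0 \<and> dot3 u v = 0}"

definition pg_lines :: "'a::field pgpoint set set" where
  "pg_lines = {line_of u | u. u \<noteq> 0}"

definition dual_3net :: "'a::field pgpoint set \<Rightarrow> 'a pgpoint set \<Rightarrow> 'a pgpoint set \<Rightarrow> nat \<Rightarrow> bool" where
  "dual_3net L1 L2 L3 n \<longleftrightarrow>
     (let L = (\<lambda>i::nat. if i = 0 then L1 else if i = 1 then L2 else L3) in
       (\<forall>i\<in>{0,1,2}. L i \<subseteq> pg_points \<and> finite (L i) \<and> card (L i) = n) \<and>
       (\<forall>i\<in>{0,1,2}. \<forall>j\<in>{0,1,2}. i \<noteq> j \<longrightarrow> L i \<inter> L j = {}) \<and>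
       (\<forall>l\<in>pg_lines. \<forall>i\<in>{0,1,2}. \<forall>j\<in>{0,1,2}.
          i \<noteq> j \<and> l \<inter> L i \<noteq> {} \<and> l \<inter> L j \<noteq> {} \<longrightarrow>
          (\<forall>k\<in>{0,1,2}. card (l \<inter> L k) = 1)))"

definition collinear_pts :: "'a::field pgpoint set \<Rightarrow> bool" where
  "collinear_pts S \<longleftrightarrow> (\<exists>l\<in>pg_lines. S \<subseteq> l)"

definition triangular_dual_3net :: "'a::field pgpoint set \<Rightarrow> 'a pgpoint set \<Rightarrow> 'a pgpoint set \<Rightarrow> nat \<Rightarrow> bool" where
  "triangular_dual_3net L1 L2 L3 n \<longleftrightarrow> dual_3net L1 L2 L3 n \<and> n \<ge> 4 \<and>
     (\<exists>A\<in>pg_points. \<exists>B\<in>pg_points. \<exists>C\<in>pg_points. \<not> collinear_pts {A, B, C} \<and>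
       (\<exists>l1\<in>pg_lines. \<exists>l2\<in>pg_lines. \<exists>l3\<in>pg_lines.
          B \<in> l1 \<and> C \<in> l1 \<and> A \<in> l2 \<and> C \<in> l2 \<and> A \<in> l3 \<and> B \<in> l3 \<and>
          L1 \<subseteq> l1 \<and> L2 \<subseteq> l2 \<and> L3 \<subseteq> l3))"

definition proj_of :: "'a::field ^ 3 ^ 3 \<Rightarrow> 'a pgpoint \<Rightarrow> 'a pgpoint" where
  "proj_of M = (\<lambda>P. if P \<in> pg_points then (\<lambda>v. M *v v) ` P else undefined)"

definition is_projectivity :: "('a::field pgpoint \<Rightarrow> 'a pgpoint) \<Rightarrow> bool" where
  "is_projectivity f \<longleftrightarrow> (\<exists>M. invertible M \<and> f = proj_of M)"

definition involutory_homology :: "('a::field pgpoint \<Rightarrow> 'a pgpoint) \<Rightarrow> 'a pgpoint \<Rightarrow> bool" where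
  "involutory_homology f P \<longleftrightarrow> is_projectivity f \<and>
     (\<forall>Q\<in>pg_points. f (f Q) = Q) \<and> (\<exists>Q\<in>pg_points. f Q \<noteq> Q) \<and>
     P \<in> pg_points \<and> f P = P \<and>
     (\<exists>l\<in>pg_lines. P \<notin> l \<and> (\<forall>Q\<in>l. f Q = Q))"

definition preserves_net :: "('a::field pgpoint \<Rightarrow> 'a pgpoint) \<Rightarrow> 'a pgpoint set \<Rightarrow> 'a pgpoint set \<Rightarrow> 'a pgpoint set \<Rightarrow> bool" where
  "preserves_net f L1 L2 L3 \<longleftrightarrow> f ` (L1 \<union> L2 \<union> L3) = L1 \<union> L2 \<union> L3"

end

theory Submission
  imports Defs
begin


definition cross3 :: "'a::field ^ 3 \<Rightarrow> 'a ^ 3 \<Rightarrow> 'a ^ 3" where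
  "cross3 x y = vector [x$2 * y$3 - x$3 * y$2, x$3 * y$1 - x$1 * y$3, x$1 * y$2 - x$2 * y$1]"

definition det3 :: "'a::field ^ 3 \<Rightarrow> 'a ^ 3 \<Rightarrow> 'a ^ 3 \<Rightarrow> 'a" where
  "det3 x y z = dot3 x (cross3 y z)"

lemma dot3_exp: "dot3 u v = u$1 * v$1 + u$2 * v$2 + u$3 * v$3"
  by (simp add: dot3_def sum_3)

lemma cross3_c [simp]:
  "cross3 x y $ 1 = x$2 * y$3 - x$3 * y$2"
  "cross3 x y $ 2 = x$3 * y$1 - x$1 * y$3"
  "cross3 x y $ 3 = x$1 * y$2 - x$2 * y$1"
  by (simp_all add: cross3_def)

lemma det3_exp: "det3 x y z = x$1*(y$2 * z$3 - y$3 * z$2) + x$2*(y$3 * z$1 - y$1 * z$3) + x$3*(y$1 * z$2 - y$2 * z$1)"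
  by (simp add: det3_def dot3_exp)

lemma vec3_eq: "(x::'a^3) = y \<longleftrightarrow> x$1 = y$1 \<and> x$2 = y$2 \<and> x$3 = y$3"
  by (simp add: vec_eq_iff forall_3)

lemma vec3_nz: "(x::'a::zero^3) \<noteq> 0 \<longleftrightarrow> x$1 \<noteq> 0 \<or> x$2 \<noteq> 0 \<or> x$3 \<noteq> 0"
  by (simp add: vec_eq_iff forall_3)

lemma dot3_comm: "dot3 u v = dot3 v u"
  by (simp add: dot3_exp mult.commute)

lemma dot3_add: "dot3 u (x + y) = dot3 u x + dot3 u y"
  by (simp add: dot3_exp algebra_simps)

lemma dot3_smult: "dot3 u (c *s x) = c * dot3 u x"
  by (simp add: dot3_exp algebra_simps)

lemma dot3_smult_l: "dot3 (c *s u) x = c * dot3 u x"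
  by (simp add: dot3_exp algebra_simps)

lemma dot3_sub: "dot3 u (x - y) = dot3 u x - dot3 u y"
  by (simp add: dot3_exp algebra_simps)

lemma dot3_neg: "dot3 u (- x) = - dot3 u x"
  by (simp add: dot3_exp algebra_simps)

lemma det3_cyc: "det3 x y z = det3 y z x" "det3 x y z = det3 z x y"
  by (simp_all add: det3_exp algebra_simps)

lemma det3_swap: "det3 x y z = - det3 y x z" "det3 x y z = - det3 x z y" "det3 x y z = - det3 z y x"
  by (simp_all add: det3_exp algebra_simps)

lemma det3_smult: "det3 (c *s x) y z = c * det3 x y z" "det3 x (c *s y) z = c * det3 x y z"
   "det3 x y (c *s z) = c * det3 x y z"
  by (simp_all add: det3_exp algebra_simps)

lemma det3_neg: "det3 (- x) y z = - det3 x y z" "det3 x (- y) z = - det3 x y z"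
   "det3 x y (- z) = - det3 x y z"
  by (simp_all add: det3_exp algebra_simps)

lemma perp_det:
  fixes u x y z :: "'a::field^3"
  assumes "u \<noteq> 0" "dot3 u x = 0" "dot3 u y = 0" "dot3 u z = 0"
  shows "det3 x y z = 0"
proof -
  have id: "det3 x y z * u$i = dot3 u x * cross3 y z $ i + dot3 u y * cross3 z x $ i + dot3 u z * cross3 x y $ i"
    if "i = 1 \<or> i = 2 \<or> i = 3" for i
    using that by (auto simp: det3_exp dot3_exp algebra_simps)
  have "\<forall>i. i = 1 \<or> i = 2 \<or> i = 3 \<longrightarrow> det3 x y z * u$i = 0"
    using id assms(2-4) by simp
  moreover obtain i where "i = 1 \<or> i = 2 \<or> i = 3" "u$i \<noteq> 0" using assms(1) vec3_nz by blast
  ultimately show ?thesis by auto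
qed

lemma two_pts_line:
  fixes x y :: "'a::field^3"
  assumes "x \<noteq> 0"
  shows "\<exists>u. u \<noteq> 0 \<and> dot3 u x = 0 \<and> dot3 u y = 0"
proof (cases "cross3 x y = 0")
  case False
  then show ?thesis
    by (intro exI[of _ "cross3 x y"]) (auto simp: dot3_exp algebra_simps)
next
  case True
  then have c: "x$2 * y$3 = x$3 * y$2" "x$3 * y$1 = x$1 * y$3" "x$1 * y$2 = x$2 * y$1"
    by (auto simp: vec3_eq)
  consider "x$1 \<noteq> 0" | "x$2 \<noteq> 0" | "x$3 \<noteq> 0" using assms vec3_nz by blast
  then show ?thesis
  proof cases
    case 1
    show ?thesis
      by (rule exI[of _ "vector [x$3, 0, - x$1]"]) (use 1 c in \<open>auto simp: dot3_exp vec3_nz algebra_simps\<close>)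
  next
    case 3
    show ?thesis
      by (rule exI[of _ "vector [0, - x$3, x$2]"]) (use 3 c in \<open>auto simp: dot3_exp vec3_nz algebra_simps\<close>)
  next
    case 2
    show ?thesis
      by (rule exI[of _ "vector [- x$2, x$1, 0]"]) (use 2 c in \<open>auto simp: dot3_exp vec3_nz algebra_simps\<close>)
  qed
qed

lemma line3_poly:
  fixes w1 w2 w3 q1 q2 q3 r1 r2 r3 p1 p2 p3 :: "'a::field"
  assumes "w1*q1+w2*q2+w3*q3 = 0" "w1*r1+w2*r2+w3*r3 = 0"
  shows "(q2*r3 - q3*r2)*(w1*p1+w2*p2+w3*p3) = w1*(p1*(q2*r3-q3*r2) + p2*(q3*r1-q1*r3)+p3*(q1*r2-q2*r1))"
    "(q3*r1 - q1*r3)*(w1*p1+w2*p2+w3*p3) = w2*(p1*(q2*r3-q3*r2) + p2*(q3*r1-q1*r3)+p3*(q1*r2-q2*r1))"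
    "(q1*r2 - q2*r1)*(w1*p1+w2*p2+w3*p3) = w3*(p1*(q2*r3-q3*r2) + p2*(q3*r1-q1*r3)+p3*(q1*r2-q2*r1))"
  using assms by algebra+

lemma line3:
  fixes w p q r :: "'a::field^3"
  assumes "cross3 q r \<noteq> 0" "dot3 w q = 0" "dot3 w r = 0" "det3 p q r = 0"
  shows "dot3 w p = 0"
proof -
  from assms(2,3) have e: "w$1 * q$1 + w$2 * q$2 + w$3 * q$3 = 0" "w$1 * r$1 + w$2 * r$2 + w$3 * r$3 = 0"
    by (auto simp: dot3_exp)
  note L = line3_poly[OF e, of "p$1" "p$2" "p$3"]
  have id: "cross3 q r $ i * dot3 w p = w$i * det3 p q r"
    if "i = 1 \<or> i = 2 \<or> i = 3" for i
    using that L unfolding dot3_exp det3_exp cross3_c by auto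
  obtain i where "i = 1 \<or> i = 2 \<or> i = 3" "cross3 q r $ i \<noteq> 0" using assms(1) vec3_nz by blast
  with id[of i] assms(4) show ?thesis by auto
qed

lemma pt_smult: "c \<noteq> 0 \<Longrightarrow> pt (c *s x) = pt (x::'a::field^3)"
  unfolding pt_def
  apply (auto simp: vector_smult_assoc)
  apply (rule_tac x="ca / c" in exI)
  apply (auto simp: vector_smult_assoc)
  done

lemma pt_eq: "pt x = pt y \<Longrightarrow> \<exists>c. c \<noteq> 0 \<and> x = c *s (y::'a::field^3)"
proof -
  assume "pt x = pt y"
  moreover have "x \<in> pt x" unfolding pt_def by (rule CollectI, rule exI[of _ 1]) simp
  ultimately show ?thesis unfolding pt_def by auto
qed

lemma cross_zero_pt:
  fixes x y :: "'a::field^3"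
  assumes "x \<noteq> 0" "y \<noteq> 0" "cross3 x y = 0"
  shows "pt x = pt y"
proof -
  from assms(3) have c: "x$2 * y$3 = x$3 * y$2" "x$3 * y$1 = x$1 * y$3" "x$1 * y$2 = x$2 * y$1"
    by (auto simp: vec3_eq)
  obtain j where j: "j = 1 \<or> j = 2 \<or> j = 3" "y$j \<noteq> 0" using assms(2) vec3_nz by blast
  have "x = (x$j / y$j) *s y"
    using j c by (auto simp: vec3_eq field_simps)
  moreover have "x$j \<noteq> 0"
  proof
    assume "x$j = 0"
    then have "x = 0" using \<open>x = (x$j / y$j) *s y\<close> by simp
    with assms(1) show False by simp
  qed
  ultimately show ?thesis using pt_smult j by (metis divide_eq_0_iff)
qed

lemma indep2:
  fixes x y :: "'a::field^3"
  assumes "cross3 x y \<noteq> 0" "a *s x + b *s y = 0"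
  shows "a = 0 \<and> b = 0"
proof -
  from assms(2) have e: "a * x$1 + b * y$1 = 0" "a * x$2 + b * y$2 = 0" "a * x$3 + b * y$3 = 0"
    by (auto simp: vec3_eq)
  have p1: "a * (x1*y2 - x2*y1) = 0" "b * (x1*y2 - x2*y1) = 0"
    if "a*x1 + b*y1 = 0" "a*x2 + b*y2 = 0" for x1 x2 y1 y2 :: 'a
    using that by algebra+
  have ia: "a * cross3 x y $ i = 0" "b * cross3 x y $ i = 0" if "i = 1 \<or> i = 2 \<or> i = 3" for i
    using that p1[OF e(1) e(2)] p1[OF e(2) e(3)] p1[OF e(3) e(1)]
    by (auto simp: algebra_simps)
  obtain i where "i = 1 \<or> i = 2 \<or> i = 3" "cross3 x y $ i \<noteq> 0" using assms(1) vec3_nz by blast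
  with ia[of i] show ?thesis by auto
qed

lemma cramer:
  fixes a b c z :: "'a::field^3"
  shows "det3 a b c *s z = det3 z b c *s a + det3 a z c *s b + det3 a b z *s c"
  by (simp add: vec3_eq det3_exp algebra_simps)



lemma pt_mem_self: "x \<in> pt x"
  unfolding pt_def by (rule CollectI, rule exI[of _ 1]) simp

lemma pts_rep: "Q \<in> pg_points \<Longrightarrow> \<exists>q. q \<noteq> 0 \<and> Q = pt q"
  unfolding pg_points_def by auto

lemma pt_in_pg: "x \<noteq> 0 \<Longrightarrow> pt x \<in> pg_points"
  unfolding pg_points_def by auto

lemma lines_rep: "l \<in> pg_lines \<Longrightarrow> \<exists>u. u \<noteq> 0 \<and> l = line_of u"
  unfolding pg_lines_def by auto

lemma line_of_in: "u \<noteq> 0 \<Longrightarrow> line_of u \<in> pg_lines"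
  unfolding pg_lines_def by auto

lemma in_line: "x \<noteq> 0 \<Longrightarrow> pt x \<in> line_of u \<longleftrightarrow> dot3 u x = 0"
proof
  assume "x \<noteq> 0" "pt x \<in> line_of u"
  then obtain y where "y \<noteq> 0" "dot3 u y = 0" "pt x = pt y" unfolding line_of_def by auto
  then obtain c where "x = c *s y" using pt_eq by blast
  then show "dot3 u x = 0" using \<open>dot3 u y = 0\<close> by (simp add: dot3_smult)
next
  assume "x \<noteq> 0" "dot3 u x = 0"
  then show "pt x \<in> line_of u" unfolding line_of_def by auto
qed

lemma pt_neq_cross: "x \<noteq> 0 \<Longrightarrow> y \<noteq> 0 \<Longrightarrow> pt x \<noteq> pt y \<Longrightarrow> cross3 x y \<noteq> 0"
  using cross_zero_pt by blast

lemma proj_pt: "x \<noteq> 0 \<Longrightarrow> proj_of M (pt x) = pt (M *v x)"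
  unfolding proj_of_def using pt_in_pg[of x]
  apply (auto simp: pt_def vector_scalar_commute)
  apply (rule_tac x="c *s x" in image_eqI)
   apply (auto simp: vector_scalar_commute)
  done

lemma inv_nz: "invertible (M::'a::field^3^3) \<Longrightarrow> x \<noteq> 0 \<Longrightarrow> M *v x \<noteq> 0"
  using inj_matrix_vector_mult[of M] by (metis injD matrix_vector_mult_0_right)

lemma homology_form:
  fixes p :: "'a::field^3"
  assumes hom: "involutory_homology f P" and Pp: "P = pt p" and p0: "p \<noteq> 0"
  shows "\<exists>v. dot3 v p \<noteq> 0 \<and> (\<forall>z. z \<noteq> 0 \<longrightarrow> z + dot3 v z *s p \<noteq> 0 \<and> f (pt z) = pt (z + dot3 v z *s p))
      \<and> (\<forall>Q. Q \<notin> pg_points \<longrightarrow> f Q = undefined)"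
proof -
  from hom obtain M where inv: "invertible M" and fM: "f = proj_of M"
    unfolding involutory_homology_def is_projectivity_def by blast
  have und: "\<forall>Q. Q \<notin> pg_points \<longrightarrow> f Q = undefined" unfolding fM proj_of_def by auto
  have fpt: "f (pt z) = pt (M *v z)" if "z \<noteq> 0" for z using proj_pt[OF that] fM by simp
  from hom have "f P = P" unfolding involutory_homology_def by blast
  then have "pt (M *v p) = pt p" using fpt[OF p0] Pp by simp
  then obtain mu where mu: "M *v p = mu *s p" using pt_eq by blast
  from hom obtain l where l: "l \<in> pg_lines" "P \<notin> l" "\<forall>Q\<in>l. f Q = Q"
    unfolding involutory_homology_def by blast
  then obtain w where w: "w \<noteq> 0" "l = line_of w" using lines_rep by blast
  have wp: "dot3 w p \<noteq> 0" using l(2) w(2) Pp in_line[OF p0] by auto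
  have fixax: "\<exists>k. M *v x = k *s x" if "x \<noteq> 0" "dot3 w x = 0" for x
  proof -
    have "pt x \<in> l" using that w(2) in_line by auto
    then have "pt (M *v x) = pt x" using l(3) fpt[OF that(1)] by simp
    then show ?thesis using pt_eq by blast
  qed
  obtain x0 where x0: "x0 \<noteq> 0" "dot3 w x0 = 0"
    using two_pts_line[OF w(1), of w] dot3_comm by metis
  obtain lam where lam: "M *v x0 = lam *s x0" using fixax[OF x0] by blast
  have ax: "M *v x = lam *s x" if hx: "dot3 w x = 0" for x
  proof (cases "x = 0")
    case True then show ?thesis by simp
  next
    case xnz: False
    show ?thesis
    proof (cases "cross3 x x0 = 0")
      case True
      then have "pt x = pt x0" using cross_zero_pt xnz x0(1) by blast
      then obtain c where "x = c *s x0" using pt_eq by blast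
      then show ?thesis using lam by (simp add: vector_scalar_commute vector_smult_assoc mult.commute)
    next
      case False
      have s: "x + x0 \<noteq> 0"
      proof
        assume "x + x0 = 0"
        then have "x = - x0" by (simp add: eq_neg_iff_add_eq_0)
        then have "cross3 x x0 = 0" by (simp add: vec3_eq algebra_simps)
        with False show False by simp
      qed
      have "dot3 w (x + x0) = 0" using hx x0 by (simp add: dot3_add)
      then obtain nu where nu: "M *v (x + x0) = nu *s (x + x0)" using fixax[OF s] by blast
      obtain k where k: "M *v x = k *s x" using fixax[OF xnz hx] by blast
      have "(k - nu) *s x + (lam - nu) *s x0 = 0"
        using nu k lam by (simp add: matrix_vector_right_distrib vec3_eq algebra_simps)
      then have "k - nu = 0 \<and> lam - nu = 0" using indep2[OF False] by blast
      then show ?thesis using k by simp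
    qed
  qed
  have Mz: "M *v z = lam *s z + ((dot3 w z / dot3 w p) * (mu - lam)) *s p" for z
  proof -
    define t where "t = dot3 w z / dot3 w p"
    have "dot3 w (z - t *s p) = 0" using wp by (simp add: t_def dot3_sub dot3_smult)
    then have "M *v (z - t *s p) = lam *s (z - t *s p)" by (rule ax)
    then have "M *v z = lam *s (z - t *s p) + t *s (M *v p)"
      by (simp add: matrix_vector_mult_diff_distrib vector_scalar_commute algebra_simps)
    then show ?thesis using mu by (simp add: t_def vec3_eq algebra_simps diff_divide_distrib)
  qed
  have lam0: "lam \<noteq> 0"
  proof
    assume "lam = 0"
    then have "M *v x0 = 0" using lam by simp
    with inv_nz[OF inv x0(1)] show False by simp
  qed
  define v where "v = ((mu - lam) / (lam * dot3 w p)) *s w"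
  have dv: "dot3 v z = (dot3 w z / dot3 w p) * (mu - lam) / lam" for z
    using wp lam0 by (simp add: v_def dot3_smult_l field_simps)
  have Mz2: "M *v z = lam *s (z + dot3 v z *s p)" for z
  proof -
    have h: "lam * (c / lam * x) = c * x" for c x using lam0 by simp
    show ?thesis using Mz[of z] by (simp only: dv) (simp add: vec3_eq distrib_left h lam0)
  qed
  have main: "z + dot3 v z *s p \<noteq> 0 \<and> f (pt z) = pt (z + dot3 v z *s p)" if "z \<noteq> 0" for z
  proof -
    have "M *v z \<noteq> 0" using inv_nz[OF inv that] .
    then have "z + dot3 v z *s p \<noteq> 0" unfolding Mz2 by (metis vector_smult_rzero)
    moreover have "f (pt z) = pt (z + dot3 v z *s p)" by (simp only: fpt[OF that] Mz2 pt_smult[OF lam0])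
    ultimately show ?thesis by simp
  qed
  have "dot3 v p \<noteq> 0"
  proof
    assume "dot3 v p = 0"
    then have "mu = lam" using dv[of p] wp lam0 by (simp add: field_simps)
    then have "v = 0" by (simp add: v_def)
    then have "f Q = Q" if hQ: "Q \<in> pg_points" for Q
    proof -
      obtain q where q: "q \<noteq> 0" "Q = pt q" using pts_rep[OF hQ] by blast
      have "dot3 v q = 0" using \<open>v = 0\<close> by (simp add: dot3_exp)
      then show ?thesis using main[OF q(1)] q(2) by simp
    qed
    with hom show False unfolding involutory_homology_def by blast
  qed
  with main und show ?thesis by blast
qed



definition netF :: "'a::field pgpoint set \<Rightarrow> 'a pgpoint set \<Rightarrow> 'a pgpoint set \<Rightarrow> nat \<Rightarrow> bool" where
  "netF L1 L2 L3 n \<longleftrightarrow> L1 \<subseteq> pg_points \<and> L2 \<subseteq> pg_points \<and> L3 \<subseteq> pg_points \<and>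
    card L1 = n \<and> card L2 = n \<and> card L3 = n \<and> L1 \<inter> L2 = {} \<and> L1 \<inter> L3 = {} \<and> L2 \<inter> L3 = {} \<and>
    (\<forall>l\<in>pg_lines. ((l \<inter> L1 \<noteq> {} \<and> l \<inter> L2 \<noteq> {}) \<or> (l \<inter> L1 \<noteq> {} \<and> l \<inter> L3 \<noteq> {}) \<or> (l \<inter> L2 \<noteq> {} \<and> l \<inter> L3 \<noteq> {}))
       \<longrightarrow> card (l \<inter> L1) = 1 \<and> card (l \<inter> L2) = 1 \<and> card (l \<inter> L3) = 1)"

lemma netF_rot: "netF L1 L2 L3 n \<Longrightarrow> netF L2 L3 L1 n"
  unfolding netF_def by (auto simp: Int_commute)

lemma dual_netF: "dual_3net L1 L2 L3 n \<Longrightarrow> netF L1 L2 L3 n"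
  unfolding dual_3net_def netF_def Let_def
  apply (elim conjE)
  apply (intro conjI)
  apply simp_all
  done


lemma netF_lineD: "netF L1 L2 L3 n \<Longrightarrow> l \<in> pg_lines \<Longrightarrow>
  (l \<inter> L1 \<noteq> {} \<and> l \<inter> L2 \<noteq> {}) \<or> (l \<inter> L1 \<noteq> {} \<and> l \<inter> L3 \<noteq> {}) \<or> (l \<inter> L2 \<noteq> {} \<and> l \<inter> L3 \<noteq> {})
   \<Longrightarrow> card (l \<inter> L1) = 1 \<and> card (l \<inter> L2) = 1 \<and> card (l \<inter> L3) = 1"
  unfolding netF_def
  apply (elim conjE)
  apply (drule bspec, assumption)
  apply (erule mp, assumption)
  done

lemma net12: "netF L1 L2 L3 n \<Longrightarrow> l \<in> pg_lines \<Longrightarrow> X \<in> l \<Longrightarrow> X \<in> L1 \<Longrightarrow> Y \<in> l \<Longrightarrow> Y \<in> L2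
   \<Longrightarrow> card (l \<inter> L1) = 1 \<and> card (l \<inter> L2) = 1 \<and> card (l \<inter> L3) = 1"
  by (rule netF_lineD) blast+
lemma net13: "netF L1 L2 L3 n \<Longrightarrow> l \<in> pg_lines \<Longrightarrow> X \<in> l \<Longrightarrow> X \<in> L1 \<Longrightarrow> Y \<in> l \<Longrightarrow> Y \<in> L3
   \<Longrightarrow> card (l \<inter> L1) = 1 \<and> card (l \<inter> L2) = 1 \<and> card (l \<inter> L3) = 1"
  by (rule netF_lineD) blast+
lemma net23: "netF L1 L2 L3 n \<Longrightarrow> l \<in> pg_lines \<Longrightarrow> X \<in> l \<Longrightarrow> X \<in> L2 \<Longrightarrow> Y \<in> l \<Longrightarrow> Y \<in> L3
   \<Longrightarrow> card (l \<inter> L1) = 1 \<and> card (l \<inter> L2) = 1 \<and> card (l \<inter> L3) = 1"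
  by (rule netF_lineD) blast+
lemma card1_sing: "card (l \<inter> L) = 1 \<Longrightarrow> X \<in> l \<Longrightarrow> X \<in> L \<Longrightarrow> l \<inter> L = {X}"
  by (metis IntI card_1_singletonE singletonD)
lemma card1_ex: "card (l \<inter> L) = 1 \<Longrightarrow> \<exists>X. X \<in> l \<and> X \<in> L"
  by (metis card_1_singletonE insertI1 IntE)
lemma netF_basic: "netF L1 L2 L3 n \<Longrightarrow> L1 \<subseteq> pg_points \<and> L2 \<subseteq> pg_points \<and> L3 \<subseteq> pg_points \<and>
    card L1 = n \<and> card L2 = n \<and> card L3 = n \<and> L1 \<inter> L2 = {} \<and> L1 \<inter> L3 = {} \<and> L2 \<inter> L3 = {}"
  unfolding netF_def by (elim conjE) (intro conjI)


lemma fix_zero: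
  fixes p q :: "'a::field^3"
  assumes "cross3 p q \<noteq> 0" "pt (q + a *s p) = pt (q + b *s p)"
  shows "a = b"
proof -
  obtain c where c: "q + a *s p = c *s (q + b *s p)" using pt_eq[OF assms(2)] by blast
  have "(a - c * b) *s p + (1 - c) *s q = 0" using c by (simp add: vec3_eq algebra_simps)
  then have "a - c * b = 0 \<and> 1 - c = 0" using indep2[OF assms(1)] by blast
  then show ?thesis by simp
qed

lemma card_big_not1: "X \<subseteq> l \<Longrightarrow> card X = n \<Longrightarrow> n \<ge> 4 \<Longrightarrow> card (l \<inter> X) \<noteq> 1"
  by (simp add: Int_absorb1)

lemma swapQR:
  fixes p q r u v :: "'a::field^3"
  assumes net: "netF L1 L2 L3 n"
    and P: "P \<in> L1" "P = pt p" "p \<noteq> 0"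
    and Q: "Q \<in> L2" "Q = pt q" "q \<noteq> 0"
    and R: "R \<in> L3" "R = pt r" "r \<noteq> 0"
    and u: "u \<noteq> 0" "dot3 u p = 0" "dot3 u q = 0" "dot3 u r = 0"
    and hom: "involutory_homology f P" and pres: "preserves_net f L1 L2 L3"
    and form: "dot3 v p \<noteq> 0" "\<forall>z. z \<noteq> 0 \<longrightarrow> z + dot3 v z *s p \<noteq> 0 \<and> f (pt z) = pt (z + dot3 v z *s p)"
  shows "f Q = R \<and> f R = Q"
proof -
  have d: "L1 \<inter> L2 = {}" "L1 \<inter> L3 = {}" "L2 \<inter> L3 = {}" using netF_basic[OF net] by auto
  have lin: "line_of u \<in> pg_lines" using line_of_in[OF u(1)] .
  have Pl: "P \<in> line_of u" using in_line[OF P(3), of u] u(2) P(2) by simp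
  have Ql: "Q \<in> line_of u" using in_line[OF Q(3), of u] u(3) Q(2) by simp
  have Rl: "R \<in> line_of u" using in_line[OF R(3), of u] u(4) R(2) by simp
  have cards: "card (line_of u \<inter> L1) = 1 \<and> card (line_of u \<inter> L2) = 1 \<and> card (line_of u \<inter> L3) = 1"
    using net12[OF net lin Pl P(1) Ql Q(1)] .
  have s1: "line_of u \<inter> L1 = {P}" using card1_sing[OF conjunct1[OF cards] Pl P(1)] .
  have s2: "line_of u \<inter> L2 = {Q}" using card1_sing[OF conjunct1[OF conjunct2[OF cards]] Ql Q(1)] .
  have s3: "line_of u \<inter> L3 = {R}" using card1_sing[OF conjunct2[OF conjunct2[OF cards]] Rl R(1)] .
  have hh: "\<forall>Q\<in>pg_points. f (f Q) = Q" "f P = P" using hom unfolding involutory_homology_def by simp_all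
  have inv: "f (f X) = X" if "X \<in> pg_points" for X using hh(1) that by blast
  have fP: "f P = P" using hh(2) .
  have sub: "L1 \<subseteq> pg_points" "L2 \<subseteq> pg_points" "L3 \<subseteq> pg_points" using netF_basic[OF net] by auto
  have img: "f X \<in> {P, Q, R}" if "z \<noteq> 0" "dot3 u z = 0" "X = pt z" "X \<in> L1 \<union> L2 \<union> L3" for X z
  proof -
    have fz: "z + dot3 v z *s p \<noteq> 0" "f (pt z) = pt (z + dot3 v z *s p)"
      using form(2)[rule_format, OF that(1)] by simp_all
    have "f X \<in> L1 \<union> L2 \<union> L3" using pres that(4) unfolding preserves_net_def by blast
    moreover have "dot3 u (z + dot3 v z *s p) = 0" using that(2) u(2) by (simp add: dot3_add dot3_smult)
    then have "f X \<in> line_of u" using in_line[OF fz(1), of u] fz(2) that(3) by simp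
    ultimately have "f X \<in> line_of u \<inter> (L1 \<union> L2 \<union> L3)" by blast
    then show ?thesis using s1 s2 s3 by blast
  qed
  have PQ: "P \<noteq> Q" "P \<noteq> R" "Q \<noteq> R" using d P(1) Q(1) R(1) by auto
  have notP: "f X \<noteq> P" if "X \<in> pg_points" "X \<noteq> P" for X
  proof
    assume "f X = P"
    then have "f (f X) = f P" by simp
    then show False using inv[OF that(1)] fP that(2) by simp
  qed
  have fixv: "dot3 v z = 0" if "z \<noteq> 0" "f (pt z) = pt z" "pt z \<noteq> P" for z
  proof -
    have "cross3 p z \<noteq> 0" using pt_neq_cross[OF P(3) that(1)] P(2) that(3) by simp
    moreover have "pt (z + dot3 v z *s p) = pt (z + 0 *s p)"
      using conjunct2[OF form(2)[rule_format, OF that(1)]] that(2) by simp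
    ultimately show ?thesis using fix_zero[of p z "dot3 v z" 0] by blast
  qed
  have fQ: "f Q \<in> {P, Q, R}" using img[OF Q(3) u(3) Q(2)] Q(1) by blast
  have fR: "f R \<in> {P, Q, R}" using img[OF R(3) u(4) R(2)] R(1) by blast
  have QR: "f Q = R"
  proof (rule ccontr)
    assume "f Q \<noteq> R"
    moreover have "f Q \<noteq> P" using notP Q(1) sub PQ by blast
    ultimately have fQQ: "f Q = Q" using fQ by blast
    have "f R \<noteq> P" using notP R(1) sub PQ by blast
    moreover have "f R \<noteq> Q"
    proof
      assume "f R = Q"
      then have "f (f R) = f Q" by simp
      then show False using fQQ inv[of R] R(1) sub PQ by auto
    qed
    ultimately have fRR: "f R = R" using fR by blast
    have vq: "dot3 v q = 0" using fixv[OF Q(3)] fQQ Q(2) PQ by auto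
    have vr: "dot3 v r = 0" using fixv[OF R(3)] fRR R(2) PQ by auto
    have "cross3 q r \<noteq> 0" using pt_neq_cross[OF Q(3) R(3)] Q(2) R(2) PQ by simp
    moreover have "det3 p q r = 0" using perp_det[OF u] .
    ultimately have "dot3 v p = 0" using line3[of q r v p] vq vr by blast
    with form(1) show False by simp
  qed
  moreover have "f R = Q" using QR inv[of Q] Q(1) sub by auto
  ultimately show ?thesis by simp
qed




lemma two_elems: "card X = n \<Longrightarrow> n \<ge> 4 \<Longrightarrow> \<exists>a b. a \<in> X \<and> b \<in> X \<and> a \<noteq> b"
proof -
  assume "card X = n" "n \<ge> 4"
  then have "finite X" "\<not> card X \<le> Suc 0" using card.infinite by fastforce+
  then show ?thesis using card_le_Suc0_iff_eq by blast
qed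

lemma uniq:
  assumes net: "netF L1 L2 L3 n" and n4: "n \<ge> 4"
    and l2: "l2 \<in> pg_lines" "L2 \<subseteq> l2" and P: "P \<in> L1"
    and f: "involutory_homology f P" "preserves_net f L1 L2 L3"
    and g: "involutory_homology g P" "preserves_net g L1 L2 L3"
  shows "f = g"
proof -
  have sub: "L1 \<subseteq> pg_points" "L2 \<subseteq> pg_points" "L3 \<subseteq> pg_points" and cn: "card L2 = n"
    using netF_basic[OF net] by auto
  obtain p where p: "p \<noteq> 0" "P = pt p" using pts_rep sub P by blast
  obtain v where v: "dot3 v p \<noteq> 0" "\<forall>z. z \<noteq> 0 \<longrightarrow> z + dot3 v z *s p \<noteq> 0 \<and> f (pt z) = pt (z + dot3 v z *s p)"
     "\<forall>Q. Q \<notin> pg_points \<longrightarrow> f Q = undefined"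
    using homology_form[OF f(1) p(2) p(1)] by blast
  obtain v' where v': "dot3 v' p \<noteq> 0" "\<forall>z. z \<noteq> 0 \<longrightarrow> z + dot3 v' z *s p \<noteq> 0 \<and> g (pt z) = pt (z + dot3 v' z *s p)"
     "\<forall>Q. Q \<notin> pg_points \<longrightarrow> g Q = undefined"
    using homology_form[OF g(1) p(2) p(1)] by blast
  have d: "L1 \<inter> L2 = {}" "L1 \<inter> L3 = {}" "L2 \<inter> L3 = {}" using netF_basic[OF net] by auto
  have key: "\<exists>r R. r \<noteq> 0 \<and> R = pt r \<and> R \<in> L3 \<and> dot3 v q = dot3 v' q \<and> dot3 v r = dot3 v' r"
    if Q: "Q \<in> L2" "Q = pt q" "q \<noteq> 0" for Q q
  proof -
    obtain u where u: "u \<noteq> 0" "dot3 u p = 0" "dot3 u q = 0" using two_pts_line[OF p(1)] by blast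
    have lin: "line_of u \<in> pg_lines" using line_of_in[OF u(1)] .
    have PQl: "P \<in> line_of u" "Q \<in> line_of u"
      using in_line[OF p(1), of u] in_line[OF Q(3), of u] u p(2) Q(2) by simp_all
    then have "card (line_of u \<inter> L3) = 1" using net12[OF net lin PQl(1) P PQl(2) Q(1)] by blast
    then obtain R where R: "R \<in> line_of u" "R \<in> L3" using card1_ex by blast
    obtain r where r: "r \<noteq> 0" "R = pt r" using pts_rep sub R(2) by blast
    have ur: "dot3 u r = 0" using R(1) r in_line[OF r(1), of u] by simp
    have F: "f Q = R \<and> f R = Q" using swapQR[OF net P p(2) p(1) Q R(2) r(2) r(1) u ur f v(1) v(2)] .
    have G: "g Q = R \<and> g R = Q" using swapQR[OF net P p(2) p(1) Q R(2) r(2) r(1) u ur g v'(1) v'(2)] .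
    have PQ: "P \<noteq> Q" "P \<noteq> R" using d P Q(1) R(2) by auto
    have c1: "cross3 p q \<noteq> 0" using pt_neq_cross[OF p(1) Q(3)] p(2) Q(2) PQ by simp
    have c2: "cross3 p r \<noteq> 0" using pt_neq_cross[OF p(1) r(1)] p(2) r(2) PQ by simp
    have a1: "f Q = pt (q + dot3 v q *s p)" "g Q = pt (q + dot3 v' q *s p)"
      using conjunct2[OF v(2)[rule_format, OF Q(3)]] conjunct2[OF v'(2)[rule_format, OF Q(3)]] Q(2) by simp_all
    have a2: "f R = pt (r + dot3 v r *s p)" "g R = pt (r + dot3 v' r *s p)"
      using conjunct2[OF v(2)[rule_format, OF r(1)]] conjunct2[OF v'(2)[rule_format, OF r(1)]] r(2) by simp_all
    have "pt (q + dot3 v q *s p) = pt (q + dot3 v' q *s p)" using F G a1 by simp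
    then have e1: "dot3 v q = dot3 v' q" using fix_zero[OF c1] by blast
    have "pt (r + dot3 v r *s p) = pt (r + dot3 v' r *s p)" using F G a2 by simp
    then have e2: "dot3 v r = dot3 v' r" using fix_zero[OF c2] by blast
    show ?thesis using e1 e2 r R by blast
  qed
  obtain Q1 Q2 where Q12: "Q1 \<in> L2" "Q2 \<in> L2" "Q1 \<noteq> Q2" using two_elems[OF cn n4] by blast
  obtain q1 where q1: "q1 \<noteq> 0" "Q1 = pt q1" using pts_rep sub Q12 by blast
  obtain q2 where q2: "q2 \<noteq> 0" "Q2 = pt q2" using pts_rep sub Q12 by blast
  obtain r1 R1 where R1: "r1 \<noteq> 0" "R1 = pt r1" "R1 \<in> L3" "dot3 v q1 = dot3 v' q1" "dot3 v r1 = dot3 v' r1"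
    using key[OF Q12(1) q1(2) q1(1)] by blast
  have e2: "dot3 v q2 = dot3 v' q2" using key[OF Q12(2) q2(2) q2(1)] by blast
  obtain u2 where u2: "u2 \<noteq> 0" "l2 = line_of u2" using lines_rep l2(1) by blast
  have uq: "dot3 u2 q1 = 0" "dot3 u2 q2 = 0"
    using l2(2) Q12 q1 q2 u2(2) in_line[OF q1(1), of u2] in_line[OF q2(1), of u2] by auto
  have cq: "cross3 q1 q2 \<noteq> 0" using pt_neq_cross[OF q1(1) q2(1)] q1(2) q2(2) Q12(3) by simp
  have det: "det3 q1 q2 r1 \<noteq> 0"
  proof
    assume "det3 q1 q2 r1 = 0"
    then have "det3 r1 q1 q2 = 0" using det3_cyc(2)[of q1 q2 r1] by simp
    then have "dot3 u2 r1 = 0" using line3[OF cq uq] by blast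
    then have "R1 \<in> l2" using u2 R1 in_line[OF R1(1), of u2] by simp
    then have "card (l2 \<inter> L2) = 1" using net23[OF net l2(1) _ Q12(1) _ R1(3)] Q12(1) l2(2) by blast
    with card_big_not1[OF l2(2) cn n4] show False by simp
  qed
  have "v - v' = 0"
  proof (rule ccontr)
    assume "v - v' \<noteq> 0"
    moreover have "dot3 (v - v') q1 = 0" "dot3 (v - v') q2 = 0" "dot3 (v - v') r1 = 0"
      using R1 e2 by (simp_all add: dot3_comm[of "v - v'"] dot3_sub dot3_comm[of _ v] dot3_comm[of _ v'])
    ultimately have "det3 q1 q2 r1 = 0" using perp_det by blast
    with det show False by simp
  qed
  then have vv: "v = v'" by simp
  show "f = g"
  proof
    fix Q
    show "f Q = g Q"
    proof (cases "Q \<in> pg_points")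
      case True
      then obtain z where z: "z \<noteq> 0" "Q = pt z" using pts_rep by blast
      show ?thesis
        using conjunct2[OF v(2)[rule_format, OF z(1)]] conjunct2[OF v'(2)[rule_format, OF z(1)]] z(2) vv by simp
    next
      case False then show ?thesis using v(3) v'(3) by simp
    qed
  qed
qed



lemma det3_rep: "det3 x x y = 0" "det3 x y x = 0" "det3 y x x = 0"
  by (simp_all add: det3_exp algebra_simps)

lemma cross_dot_self: "dot3 (cross3 a b) a = 0" "dot3 (cross3 a b) b = 0" "dot3 (cross3 a b) c = det3 c a b"
  by (simp_all add: det3_exp dot3_exp algebra_simps)

lemma noncol_det:
  fixes a b c :: "'a::field^3"
  assumes "a \<noteq> 0" "b \<noteq> 0" "c \<noteq> 0" "det3 a b c = 0"
  shows "collinear_pts {pt a, pt b, pt c}"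
proof (cases "cross3 a b = 0")
  case False
  have "dot3 (cross3 a b) c = 0" using assms(4) det3_cyc(2)[of a b c] cross_dot_self(3) by metis
  then have "{pt a, pt b, pt c} \<subseteq> line_of (cross3 a b)"
    using in_line[OF assms(1)] in_line[OF assms(2)] in_line[OF assms(3)] cross_dot_self by auto
  then show ?thesis unfolding collinear_pts_def using line_of_in[OF False] by blast
next
  case True
  then have "pt a = pt b" using cross_zero_pt assms by blast
  then obtain k where k: "b = k *s a" using pt_eq by metis
  obtain u where u: "u \<noteq> 0" "dot3 u a = 0" "dot3 u c = 0" using two_pts_line[OF assms(1)] by blast
  have "dot3 u b = 0" using k u by (simp add: dot3_smult)
  then have "{pt a, pt b, pt c} \<subseteq> line_of u"
    using in_line[OF assms(1)] in_line[OF assms(2)] in_line[OF assms(3)] u by auto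
  then show ?thesis unfolding collinear_pts_def using line_of_in[OF u(1)] by blast
qed

lemma pt_meet:
  fixes u ut p r y :: "'a::field^3"
  assumes "u \<noteq> 0" "dot3 u p = 0" "dot3 u r = 0" "dot3 u y = 0"
    "dot3 ut r = 0" "dot3 ut y = 0" "dot3 ut p \<noteq> 0" "r \<noteq> 0" "y \<noteq> 0"
  shows "pt y = pt r"
proof (rule ccontr)
  assume "pt y \<noteq> pt r"
  then have c: "cross3 y r \<noteq> 0" using pt_neq_cross assms(8,9) by blast
  have "det3 p y r = 0" using perp_det[OF assms(1,2,4,3)] .
  then have "dot3 ut p = 0" using line3[OF c assms(6,5)] by blast
  with assms(7) show False by simp
qed

lemma detF:
  fixes x y z v p :: "'a::field^3"
  shows "det3 (x + dot3 v x *s p) (y + dot3 v y *s p) (z + dot3 v z *s p) = (1 + dot3 v p) * det3 x y z"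
  by (simp add: det3_exp dot3_exp algebra_simps)



lemma nonempty_card: "card X = n \<Longrightarrow> n \<ge> 4 \<Longrightarrow> \<exists>x. x \<in> X"
  by (metis card.empty ex_in_conv not_numeral_le_zero)

lemma not_on_side:
  assumes net: "netF L1 L2 L3 n" and n4: "n \<ge> 4" and l: "l \<in> pg_lines"
  shows "L2 \<subseteq> l \<Longrightarrow> X \<in> L1 \<Longrightarrow> X \<notin> l"
    and "L3 \<subseteq> l \<Longrightarrow> X \<in> L1 \<Longrightarrow> X \<notin> l"
    and "L1 \<subseteq> l \<Longrightarrow> X \<in> L3 \<Longrightarrow> X \<notin> l"
    and "L1 \<subseteq> l \<Longrightarrow> X \<in> L2 \<Longrightarrow> X \<notin> l"
proof -
  have c: "card L1 = n" "card L2 = n" "card L3 = n" using netF_basic[OF net] by auto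
  obtain y1 where y1: "y1 \<in> L1" using nonempty_card[OF c(1) n4] by blast
  obtain y2 where y2: "y2 \<in> L2" using nonempty_card[OF c(2) n4] by blast
  obtain y3 where y3: "y3 \<in> L3" using nonempty_card[OF c(3) n4] by blast
  show "X \<notin> l" if "L2 \<subseteq> l" "X \<in> L1"
  proof
    assume "X \<in> l"
    then have "card (l \<inter> L2) = 1" using net12[OF net l _ that(2) _ y2] y2 that(1) by blast
    with card_big_not1[OF that(1) c(2) n4] show False by simp
  qed
  show "X \<notin> l" if "L3 \<subseteq> l" "X \<in> L1"
  proof
    assume "X \<in> l"
    then have "card (l \<inter> L3) = 1" using net13[OF net l _ that(2) _ y3] y3 that(1) by blast
    with card_big_not1[OF that(1) c(3) n4] show False by simp
  qed
  show "X \<notin> l" if "L1 \<subseteq> l" "X \<in> L3"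
  proof
    assume "X \<in> l"
    then have "card (l \<inter> L1) = 1" using net13[OF net l _ y1 _ that(2)] y1 that(1) by blast
    with card_big_not1[OF that(1) c(1) n4] show False by simp
  qed
  show "X \<notin> l" if "L1 \<subseteq> l" "X \<in> L2"
  proof
    assume "X \<in> l"
    then have "card (l \<inter> L1) = 1" using net12[OF net l _ y1 _ that(2)] y1 that(1) by blast
    with card_big_not1[OF that(1) c(1) n4] show False by simp
  qed
qed



lemma coords:
  assumes net: "netF L1 L2 L3 n" and n4: "n \<ge> 4"
    and pts: "A \<in> pg_points" "B \<in> pg_points" "C \<in> pg_points" and nc: "\<not> collinear_pts {A, B, C}"
    and lns: "l1 \<in> pg_lines" "l2 \<in> pg_lines" "l3 \<in> pg_lines"
    and inc: "B \<in> l1" "C \<in> l1" "A \<in> l2" "C \<in> l2" "A \<in> l3" "B \<in> l3"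
    and sub: "L1 \<subseteq> l1" "L2 \<subseteq> l2" "L3 \<subseteq> l3" and P: "P \<in> L1"
  shows "\<exists>a b c u1 u2 u3. a \<noteq> 0 \<and> b \<noteq> 0 \<and> c \<noteq> 0 \<and> u1 \<noteq> 0 \<and> u2 \<noteq> 0 \<and> u3 \<noteq> 0 \<and>
     l1 = line_of u1 \<and> l2 = line_of u2 \<and> l3 = line_of u3 \<and>
     dot3 u1 b = 0 \<and> dot3 u1 c = 0 \<and> dot3 u2 a = 0 \<and> dot3 u2 c = 0 \<and> dot3 u3 a = 0 \<and> dot3 u3 b = 0 \<and>
     det3 a b c \<noteq> 0 \<and> P = pt (b + c) \<and> dot3 u1 (b + c) = 0 \<and> dot3 u2 (b + c) \<noteq> 0 \<and> dot3 u3 (b + c) \<noteq> 0"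
proof -
  obtain a where a: "a \<noteq> 0" "A = pt a" using pts_rep pts(1) by blast
  obtain b0 where b0: "b0 \<noteq> 0" "B = pt b0" using pts_rep pts(2) by blast
  obtain c0 where c0: "c0 \<noteq> 0" "C = pt c0" using pts_rep pts(3) by blast
  obtain u1 where u1: "u1 \<noteq> 0" "l1 = line_of u1" using lines_rep lns(1) by blast
  obtain u2 where u2: "u2 \<noteq> 0" "l2 = line_of u2" using lines_rep lns(2) by blast
  obtain u3 where u3: "u3 \<noteq> 0" "l3 = line_of u3" using lines_rep lns(3) by blast
  have d1: "dot3 u1 b0 = 0" "dot3 u1 c0 = 0"
    using inc(1,2) u1(2) b0 c0 in_line[OF b0(1), of u1] in_line[OF c0(1), of u1] by auto
  have d2: "dot3 u2 a = 0" "dot3 u2 c0 = 0"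
    using inc(3,4) u2(2) a c0 in_line[OF a(1), of u2] in_line[OF c0(1), of u2] by auto
  have d3: "dot3 u3 a = 0" "dot3 u3 b0 = 0"
    using inc(5,6) u3(2) a b0 in_line[OF a(1), of u3] in_line[OF b0(1), of u3] by auto
  have D0: "det3 a b0 c0 \<noteq> 0"
    using noncol_det[OF a(1) b0(1) c0(1)] nc a(2) b0(2) c0(2) by blast
  have Pp: "P \<in> pg_points" using P netF_basic[OF net] by blast
  obtain p0 where p0: "p0 \<noteq> 0" "P = pt p0" using pts_rep Pp by blast
  have "P \<in> l1" using P sub(1) by blast
  then have up1: "dot3 u1 p0 = 0" using u1(2) p0 in_line[OF p0(1), of u1] by simp
  have "P \<notin> l2" using not_on_side(1)[OF net n4 lns(2) sub(2) P] .
  then have up2: "dot3 u2 p0 \<noteq> 0" using u2(2) p0 in_line[OF p0(1), of u2] by simp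
  have "P \<notin> l3" using not_on_side(2)[OF net n4 lns(3) sub(3) P] .
  then have up3: "dot3 u3 p0 \<noteq> 0" using u3(2) p0 in_line[OF p0(1), of u3] by simp
  define \<beta> where "\<beta> = det3 a p0 c0"
  define \<gamma> where "\<gamma> = det3 a b0 p0"
  have z: "det3 p0 b0 c0 = 0" using perp_det[OF u1(1) up1 d1] .
  have cr: "det3 a b0 c0 *s p0 = \<beta> *s b0 + \<gamma> *s c0"
    using cramer[of a b0 c0 p0] z by (simp add: \<beta>_def \<gamma>_def)
  have "dot3 u2 (det3 a b0 c0 *s p0) = \<beta> * dot3 u2 b0"
    using cr d2 by (simp add: dot3_add dot3_smult)
  then have "\<beta> \<noteq> 0" using D0 up2 by (auto simp: dot3_smult)
  have "dot3 u3 (det3 a b0 c0 *s p0) = \<gamma> * dot3 u3 c0"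
    using cr d3 by (simp add: dot3_add dot3_smult)
  then have "\<gamma> \<noteq> 0" using D0 up3 by (auto simp: dot3_smult)
  define b where "b = \<beta> *s b0"
  define c where "c = \<gamma> *s c0"
  have bc: "b \<noteq> 0" "c \<noteq> 0" using \<open>\<beta> \<noteq> 0\<close> \<open>\<gamma> \<noteq> 0\<close> b0(1) c0(1)
    by (auto simp: b_def c_def vec3_eq vec3_nz)
  have "b + c = det3 a b0 c0 *s p0" using cr by (simp add: b_def c_def)
  then have Pbc: "P = pt (b + c)" using p0(2) pt_smult[OF D0] by simp
  have dd: "dot3 u1 b = 0" "dot3 u1 c = 0" "dot3 u2 c = 0" "dot3 u3 b = 0"
    using d1 d2 d3 by (simp_all add: b_def c_def dot3_smult)
  have "det3 a b c = \<beta> * \<gamma> * det3 a b0 c0" by (simp add: b_def c_def det3_smult)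
  then have D: "det3 a b c \<noteq> 0" using D0 \<open>\<beta> \<noteq> 0\<close> \<open>\<gamma> \<noteq> 0\<close> by simp
  have e: "dot3 u1 (b + c) = 0" "dot3 u2 (b + c) \<noteq> 0" "dot3 u3 (b + c) \<noteq> 0"
    using \<open>b + c = det3 a b0 c0 *s p0\<close> up1 up2 up3 D0 by (simp_all add: dot3_smult)
  show ?thesis
    apply (rule exI[of _ a], rule exI[of _ b], rule exI[of _ c])
    apply (rule exI[of _ u1], rule exI[of _ u2], rule exI[of _ u3])
    using a(1) bc u1 u2 u3 dd d2 d3 D Pbc e by simp
qed



lemma dot_cross: "dot3 (cross3 x y) z = det3 z x y"
  by (simp add: det3_def dot3_comm)

lemma dot3_ladd: "dot3 (x + y) z = dot3 x z + dot3 y z"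
  by (simp add: dot3_exp algebra_simps)

lemma outer_mv:
  fixes p v z :: "'a::field^3"
  shows "(\<chi> i j. p$i * v$j) *v z = dot3 v z *s p"
  by (simp add: matrix_vector_mult_def vec_eq_iff dot3_def sum_distrib_left mult.assoc mult.commute mult.left_commute)

lemma construct:
  fixes a b c u1 u2 u3 :: "'a::field^3"
  assumes net: "netF L1 L2 L3 n" and n4: "n \<ge> 4" and two: "(2::'a) \<noteq> 0"
    and lns: "l1 \<in> pg_lines" "l2 \<in> pg_lines" "l3 \<in> pg_lines"
    and sub: "L1 \<subseteq> l1" "L2 \<subseteq> l2" "L3 \<subseteq> l3" and P: "P \<in> L1"
    and nz: "a \<noteq> 0" "b \<noteq> 0" "c \<noteq> 0" "u1 \<noteq> 0" "u2 \<noteq> 0" "u3 \<noteq> 0"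
    and ls: "l1 = line_of u1" "l2 = line_of u2" "l3 = line_of u3"
    and dots: "dot3 u1 b = 0" "dot3 u1 c = 0" "dot3 u2 a = 0" "dot3 u2 c = 0" "dot3 u3 a = 0" "dot3 u3 b = 0"
    and D: "det3 a b c \<noteq> 0" and Pbc: "P = pt (b + c)"
    and pd: "dot3 u1 (b + c) = 0" "dot3 u2 (b + c) \<noteq> 0" "dot3 u3 (b + c) \<noteq> 0"
  shows "\<exists>f. involutory_homology f P \<and> preserves_net f L1 L2 L3"
proof -
  define p where "p = b + c"
  have "dot3 u2 p \<noteq> 0" using pd(2) p_def by simp
  then have p0: "p \<noteq> 0" by (auto simp: dot3_exp)
  define DD where "DD = det3 a b c"
  define v where "v = (- 1 / DD) *s (cross3 c a + cross3 a b)"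
  have dv: "dot3 v z = (- 1 / DD) * (det3 z c a + det3 z a b)" for z
    unfolding v_def dot3_smult_l dot3_ladd dot_cross ..
  have DD0: "DD \<noteq> 0" using D DD_def by simp
  have va: "dot3 v a = 0" using dv[of a] by (simp add: det3_rep)
  have "det3 b c a = DD" using det3_cyc(1)[of a b c] DD_def by simp
  then have vb: "dot3 v b = -1" using dv[of b] DD0 by (simp add: det3_rep)
  have "det3 c a b = DD" using det3_cyc(2)[of a b c] DD_def by simp
  then have vc: "dot3 v c = -1" using dv[of c] DD0 by (simp add: det3_rep)
  have vp: "dot3 v p = -2" using vb vc by (simp add: p_def dot3_add)
  define F where "F = (\<lambda>z. z + dot3 v z *s p)"
  have Fa: "F a = a" using va by (simp add: F_def)
  have Fb: "F b = - c" using vb by (simp add: F_def p_def vec3_eq)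
  have Fc: "F c = - b" using vc by (simp add: F_def p_def vec3_eq)
  have Fp: "F p = (-1) *s p" using vp by (simp add: F_def vec3_eq algebra_simps)
  have FF: "F (F z) = z" for z
  proof -
    have "dot3 v (F z) = - dot3 v z" using vp by (simp add: F_def dot3_add dot3_smult)
    then show ?thesis by (simp add: F_def vec3_eq algebra_simps)
  qed
  have Fnz: "F z \<noteq> 0" if "z \<noteq> 0" for z
  proof
    assume "F z = 0"
    moreover have "F 0 = 0" by (simp add: F_def dot3_exp)
    ultimately have "F (F z) = 0" by simp
    with FF that show False by simp
  qed
  have detF': "det3 (F x) (F y) (F z) = - det3 x y z" for x y z
    unfolding F_def using detF[of x v p y z] vp by simp
  define M :: "'a^3^3" where "M = mat 1 + (\<chi> i j. p$i * v$j)"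
  have Mv: "M *v z = F z" for z
    by (simp add: M_def F_def matrix_vector_mult_add_rdistrib outer_mv)
  have MM: "M ** M = mat 1"
    by (subst matrix_eq) (simp add: matrix_vector_mul_assoc[symmetric] Mv FF)
  have invM: "invertible M" unfolding invertible_def using MM by blast
  define f where "f = proj_of M"
  have fpt: "f (pt z) = pt (F z)" if "z \<noteq> 0" for z
  proof -
    have "f (pt z) = pt (M *v z)" unfolding f_def by (rule proj_pt[OF that])
    then show ?thesis by (simp only: Mv)
  qed
  have sub': "L1 \<subseteq> pg_points" "L2 \<subseteq> pg_points" "L3 \<subseteq> pg_points" and cards: "card L2 = n"
    and disj: "L1 \<inter> L2 = {}" "L1 \<inter> L3 = {}" "L2 \<inter> L3 = {}" using netF_basic[OF net] by simp_all
  have ff: "f (f Q) = Q" if hQ: "Q \<in> pg_points" for Q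
  proof -
    obtain z where z: "z \<noteq> 0" "Q = pt z" using pts_rep hQ by blast
    have "f Q = pt (F z)" using fpt[OF z(1)] z(2) by simp
    then have "f (f Q) = pt (F (F z))" using fpt[OF Fnz[OF z(1)]] by simp
    then show ?thesis using FF z(2) by simp
  qed
  have bc: "pt b \<noteq> pt c"
  proof
    assume "pt b = pt c"
    then obtain k where "b = k *s c" using pt_eq by blast
    then have "det3 a b c = 0" by (simp add: det3_smult det3_rep)
    with D show False by simp
  qed
  have hom: "involutory_homology f P"
    unfolding involutory_homology_def
  proof (intro conjI)
    show "is_projectivity f" unfolding is_projectivity_def f_def using invM by blast
    show "\<forall>Q\<in>pg_points. f (f Q) = Q" using ff by blast
    have "f (pt b) = pt c" using fpt[OF nz(2)] Fb pt_smult[of "-1" c] by (simp add: vector_sneg_minus1[symmetric])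
    then show "\<exists>Q\<in>pg_points. f Q \<noteq> Q" using pt_in_pg[OF nz(2)] bc by (intro bexI[of _ "pt b"]) simp_all
    show "P \<in> pg_points" using Pbc p_def pt_in_pg[OF p0] by simp
    show "f P = P" using Pbc fpt[OF p0] Fp pt_smult[of "-1" p] by (simp add: p_def)
    have v0: "v \<noteq> 0" using vb by (auto simp: dot3_exp)
    have "P \<notin> line_of v" using Pbc in_line[OF p0, of v] vp two by (simp add: p_def)
    moreover have "\<forall>Q\<in>line_of v. f Q = Q"
    proof
      fix Q assume "Q \<in> line_of v"
      then obtain z where z: "z \<noteq> 0" "dot3 v z = 0" "Q = pt z" unfolding line_of_def by blast
      then show "f Q = Q" using fpt[OF z(1)] by (simp add: F_def)
    qed
    ultimately show "\<exists>l\<in>pg_lines. P \<notin> l \<and> (\<forall>Q\<in>l. f Q = Q)" using line_of_in[OF v0] by blast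
  qed
  have cab: "cross3 a b \<noteq> 0"
  proof
    assume "cross3 a b = 0"
    then have "det3 c a b = 0" using dot_cross[of a b c] by (simp add: dot3_exp)
    with D show False using det3_cyc(2)[of a b c] by simp
  qed
  have cac: "cross3 a c \<noteq> 0"
  proof
    assume "cross3 a c = 0"
    then have "det3 b a c = 0" using dot_cross[of a c b] by (simp add: dot3_exp)
    with D show False using det3_swap(1)[of a b c] by simp
  qed
  have cbc: "cross3 b c \<noteq> 0"
  proof
    assume "cross3 b c = 0"
    then have "det3 a b c = 0" using dot_cross[of b c a] by (simp add: dot3_exp)
    with D show False by simp
  qed
  have onl: "dot3 u z = 0" if "pt z \<in> line_of u" "z \<noteq> 0" for u z using in_line[OF that(2)] that(1) by simp
  have T23: "f Q \<in> L3 \<and> (\<exists>q. q \<noteq> 0 \<and> Q = pt q \<and> f Q = pt (F q))" if Q: "Q \<in> L2" for Q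
  proof -
    obtain q where q: "q \<noteq> 0" "Q = pt q" using pts_rep sub' Q by blast
    have u2q: "dot3 u2 q = 0" using onl[of q u2] Q sub(2) ls(2) q by blast
    have "det3 a c q = 0" using perp_det[OF nz(5) dots(3) dots(4) u2q] .
    then have "det3 (F a) (F c) (F q) = 0" using detF' by simp
    then have "det3 (F q) a b = 0" using Fa Fc det3_cyc(2)[of a b "F q"] by (simp add: det3_neg)
    then have u3F: "dot3 u3 (F q) = 0" using line3[OF cab dots(5) dots(6)] by blast
    obtain u where u: "u \<noteq> 0" "dot3 u p = 0" "dot3 u q = 0" using two_pts_line[OF p0] by blast
    have lu: "line_of u \<in> pg_lines" using line_of_in[OF u(1)] .
    have "P \<in> line_of u" "Q \<in> line_of u" using in_line[OF p0, of u] in_line[OF q(1), of u] u Pbc q(2) p_def by simp_all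
    then have "card (line_of u \<inter> L3) = 1" using net12[OF net lu _ P _ Q] by blast
    then obtain R where R: "R \<in> line_of u" "R \<in> L3" using card1_ex by blast
    obtain r where r: "r \<noteq> 0" "R = pt r" using pts_rep sub' R(2) by blast
    have ur: "dot3 u r = 0" using onl[of r u] R(1) r by simp
    have u3r: "dot3 u3 r = 0" using onl[of r u3] R(2) sub(3) ls(3) r by blast
    have uF: "dot3 u (F q) = 0" using u by (simp add: F_def dot3_add dot3_smult)
    have "pt (F q) = pt r"
      using pt_meet[OF u(1) u(2) ur uF u3r u3F _ r(1) Fnz[OF q(1)]] pd(3) p_def by simp
    then show ?thesis using fpt[OF q(1)] q r R by auto
  qed
  have T32: "f Q \<in> L2 \<and> (\<exists>q. q \<noteq> 0 \<and> Q = pt q \<and> f Q = pt (F q))" if Q: "Q \<in> L3" for Q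
  proof -
    obtain q where q: "q \<noteq> 0" "Q = pt q" using pts_rep sub' Q by blast
    have u3q: "dot3 u3 q = 0" using onl[of q u3] Q sub(3) ls(3) q by blast
    have "det3 a b q = 0" using perp_det[OF nz(6) dots(5) dots(6) u3q] .
    then have "det3 (F a) (F b) (F q) = 0" using detF' by simp
    then have "det3 (F q) a c = 0" using Fa Fb det3_cyc(2)[of a c "F q"] by (simp add: det3_neg)
    then have u2F: "dot3 u2 (F q) = 0" using line3[OF cac dots(3) dots(4)] by blast
    obtain u where u: "u \<noteq> 0" "dot3 u p = 0" "dot3 u q = 0" using two_pts_line[OF p0] by blast
    have lu: "line_of u \<in> pg_lines" using line_of_in[OF u(1)] .
    have "P \<in> line_of u" "Q \<in> line_of u" using in_line[OF p0, of u] in_line[OF q(1), of u] u Pbc q(2) p_def by simp_all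
    then have "card (line_of u \<inter> L2) = 1" using net13[OF net lu _ P _ Q] by blast
    then obtain R where R: "R \<in> line_of u" "R \<in> L2" using card1_ex by blast
    obtain r where r: "r \<noteq> 0" "R = pt r" using pts_rep sub' R(2) by blast
    have ur: "dot3 u r = 0" using onl[of r u] R(1) r by simp
    have u2r: "dot3 u2 r = 0" using onl[of r u2] R(2) sub(2) ls(2) r by blast
    have uF: "dot3 u (F q) = 0" using u by (simp add: F_def dot3_add dot3_smult)
    have "pt (F q) = pt r"
      using pt_meet[OF u(1) u(2) ur uF u2r u2F _ r(1) Fnz[OF q(1)]] pd(2) p_def by simp
    then show ?thesis using fpt[OF q(1)] q r R by auto
  qed
  have T11: "f X \<in> L1" if X: "X \<in> L1" for X
  proof -
    obtain x where x: "x \<noteq> 0" "X = pt x" using pts_rep sub' X by blast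
    have u1x: "dot3 u1 x = 0" using onl[of x u1] X sub(1) ls(1) x by blast
    have "det3 b c x = 0" using perp_det[OF nz(4) dots(1) dots(2) u1x] .
    then have "det3 (F b) (F c) (F x) = 0" using detF' by simp
    then have "det3 (F x) b c = 0" using Fb Fc det3_cyc(2)[of b c "F x"] det3_swap(1)[of c b "F x"] by (simp add: det3_neg)
    then have u1F: "dot3 u1 (F x) = 0" using line3[OF cbc dots(1) dots(2)] by blast
    obtain Q where Q: "Q \<in> L2" using nonempty_card[OF cards n4] by blast
    obtain q where q: "q \<noteq> 0" "Q = pt q" using pts_rep sub' Q by blast
    obtain u where u: "u \<noteq> 0" "dot3 u x = 0" "dot3 u q = 0" using two_pts_line[OF x(1)] by blast
    have lu: "line_of u \<in> pg_lines" using line_of_in[OF u(1)] .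
    have "X \<in> line_of u" "Q \<in> line_of u" using in_line[OF x(1), of u] in_line[OF q(1), of u] u x(2) q(2) by simp_all
    then have "card (line_of u \<inter> L3) = 1" using net12[OF net lu _ X _ Q] by blast
    then obtain R where R: "R \<in> line_of u" "R \<in> L3" using card1_ex by blast
    obtain r where r: "r \<noteq> 0" "R = pt r" using pts_rep sub' R(2) by blast
    have ur: "dot3 u r = 0" using onl[of r u] R(1) r by simp
    have fQ: "f Q = pt (F q)" "f Q \<in> L3" using T23[OF Q] fpt[OF q(1)] q by auto
    have fR: "f R = pt (F r)" "f R \<in> L2" using T32[OF R(2)] fpt[OF r(1)] r by auto
    obtain u' where u': "u' \<noteq> 0" "dot3 u' (F q) = 0" "dot3 u' (F r) = 0" using two_pts_line[OF Fnz[OF q(1)]] by blast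
    have lu': "line_of u' \<in> pg_lines" using line_of_in[OF u'(1)] .
    have "f Q \<in> line_of u'" "f R \<in> line_of u'"
      using in_line[OF Fnz[OF q(1)], of u'] in_line[OF Fnz[OF r(1)], of u'] u' fQ(1) fR(1) by simp_all
    then have "card (line_of u' \<inter> L1) = 1" using net23[OF net lu' _ fR(2) _ fQ(2)] by blast
    then obtain X' where X': "X' \<in> line_of u'" "X' \<in> L1" using card1_ex by blast
    obtain x' where x': "x' \<noteq> 0" "X' = pt x'" using pts_rep sub' X'(2) by blast
    have u'x': "dot3 u' x' = 0" using onl[of x' u'] X'(1) x' by simp
    have u1x': "dot3 u1 x' = 0" using onl[of x' u1] X'(2) sub(1) ls(1) x' by blast
    have "det3 x q r = 0" using perp_det[OF u(1) u(2) u(3) ur] .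
    then have dF: "det3 (F x) (F q) (F r) = 0" using detF' by simp
    have "pt (F q) \<noteq> pt (F r)" using fQ fR disj by auto
    then have cFF: "cross3 (F q) (F r) \<noteq> 0" using pt_neq_cross Fnz q(1) r(1) by blast
    have u'F: "dot3 u' (F x) = 0" using line3[OF cFF u'(2) u'(3) dF] .
    have "f Q \<notin> l1" using not_on_side(3)[OF net n4 lns(1) sub(1) fQ(2)] .
    then have u1Fq: "dot3 u1 (F q) \<noteq> 0" using in_line[OF Fnz[OF q(1)], of u1] fQ(1) ls(1) by simp
    have "pt (F x) = pt x'" using pt_meet[OF u'(1) u'(2) u'x' u'F u1x' u1F u1Fq x'(1) Fnz[OF x(1)]] .
    then show ?thesis using fpt[OF x(1)] x X' x' by simp
  qed
  have img: "f ` (L1 \<union> L2 \<union> L3) \<subseteq> L1 \<union> L2 \<union> L3" using T11 T23 T32 by blast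
  have "L1 \<union> L2 \<union> L3 \<subseteq> f ` (L1 \<union> L2 \<union> L3)"
  proof
    fix X assume X: "X \<in> L1 \<union> L2 \<union> L3"
    then have "X \<in> pg_points" using sub' by blast
    then have "X = f (f X)" using ff by simp
    moreover have "f X \<in> L1 \<union> L2 \<union> L3" using img X by blast
    ultimately show "X \<in> f ` (L1 \<union> L2 \<union> L3)" by blast
  qed
  then have "preserves_net f L1 L2 L3" unfolding preserves_net_def using img by blast
  with hom show ?thesis by blast
qed


lemma main_L1:
  assumes net: "netF L1 L2 L3 n" and n4: "n \<ge> 4" and two: "(2::'a::field) \<noteq> 0"
    and pts: "A \<in> pg_points" "B \<in> pg_points" "C \<in> pg_points" and nc: "\<not> collinear_pts {A, B, C}"
    and lns: "l1 \<in> pg_lines" "l2 \<in> pg_lines" "l3 \<in> pg_lines"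
    and inc: "B \<in> l1" "C \<in> l1" "A \<in> l2" "C \<in> l2" "A \<in> l3" "B \<in> l3"
    and sub: "L1 \<subseteq> l1" "L2 \<subseteq> l2" "L3 \<subseteq> l3" and P: "P \<in> L1"
  shows "\<exists>!f. involutory_homology f P \<and> preserves_net f L1 L2 (L3 :: 'a pgpoint set)"
proof -
  obtain a b c u1 u2 u3 where co: "a \<noteq> 0" "b \<noteq> 0" "c \<noteq> 0" "u1 \<noteq> 0" "u2 \<noteq> 0" "u3 \<noteq> 0"
     "l1 = line_of u1" "l2 = line_of u2" "l3 = line_of u3"
     "dot3 u1 b = 0" "dot3 u1 c = 0" "dot3 u2 a = 0" "dot3 u2 c = 0" "dot3 u3 a = 0" "dot3 u3 b = 0"
     "det3 a b c \<noteq> 0" "P = pt (b + c)" "dot3 u1 (b + c) = 0" "dot3 u2 (b + c) \<noteq> 0" "dot3 u3 (b + c) \<noteq> 0"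
    using coords[OF net n4 pts nc lns inc sub P] by blast
  obtain f where f: "involutory_homology f P" "preserves_net f L1 L2 L3"
    using construct[OF net n4 two lns sub P co] by blast
  show ?thesis
  proof (rule ex1I[of _ f])
    show "involutory_homology f P \<and> preserves_net f L1 L2 L3" using f by simp
    fix g assume "involutory_homology g P \<and> preserves_net g L1 L2 L3"
    then show "g = f" using uniq[OF net n4 lns(2) sub(2) P] f by blast
  qed
qed

theorem proposition4p5:
  fixes L1 L2 L3 :: "'a::field pgpoint set" and n :: nat
  assumes "alg_closed TYPE('a)"
    and "(2::'a) \<noteq> 0"
    and "triangular_dual_3net L1 L2 L3 n"
  shows "\<forall>P\<in>L1 \<union> L2 \<union> L3. \<exists>!f. involutory_homology f P \<and> preserves_net f L1 L2 L3"
proof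
  fix P assume P: "P \<in> L1 \<union> L2 \<union> L3"
  have d: "dual_3net L1 L2 L3 n" and n4: "n \<ge> 4" using assms(3) unfolding triangular_dual_3net_def by auto
  from assms(3) obtain A B C l1 l2 l3 where
    pts: "A \<in> pg_points" "B \<in> pg_points" "C \<in> pg_points" and nc: "\<not> collinear_pts {A, B, C}"
    and lns: "l1 \<in> pg_lines" "l2 \<in> pg_lines" "l3 \<in> pg_lines"
    and inc: "B \<in> l1" "C \<in> l1" "A \<in> l2" "C \<in> l2" "A \<in> l3" "B \<in> l3"
    and sub: "L1 \<subseteq> l1" "L2 \<subseteq> l2" "L3 \<subseteq> l3"
    unfolding triangular_dual_3net_def by blast
  have net: "netF L1 L2 L3 n" using dual_netF[OF d] .
  have net2: "netF L2 L3 L1 n" using netF_rot[OF net] .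
  have net3: "netF L3 L1 L2 n" using netF_rot[OF net2] .
  have nc2: "\<not> collinear_pts {B, C, A}" using nc by (simp add: insert_commute)
  have nc3: "\<not> collinear_pts {C, A, B}" using nc by (simp add: insert_commute)
  have pr2: "preserves_net f L2 L3 L1 = preserves_net f L1 L2 L3" for f
    unfolding preserves_net_def by (simp add: Un_ac)
  have pr3: "preserves_net f L3 L1 L2 = preserves_net f L1 L2 L3" for f
    unfolding preserves_net_def by (simp add: Un_ac)
  consider "P \<in> L1" | "P \<in> L2" | "P \<in> L3" using P by blast
  then show "\<exists>!f. involutory_homology f P \<and> preserves_net f L1 L2 L3"
  proof cases
    case 1
    show ?thesis using main_L1[OF net n4 assms(2) pts nc lns inc sub 1] .
  next
    case 2
    show ?thesis
      using main_L1[OF net2 n4 assms(2) pts(2) pts(3) pts(1) nc2 lns(2) lns(3) lns(1)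
          inc(4) inc(3) inc(6) inc(5) inc(1) inc(2) sub(2) sub(3) sub(1) 2]
      by (simp only: pr2)
  next
    case 3
    show ?thesis
      using main_L1[OF net3 n4 assms(2) pts(3) pts(1) pts(2) nc3 lns(3) lns(1) lns(2)
          inc(5) inc(6) inc(2) inc(1) inc(4) inc(3) sub(3) sub(1) sub(2) 3]
      by (simp only: pr3)
  qed
qed

end
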